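(* Let $a\geq 1$ and $b\geq 1$ be integers and let $x\in\Lambda^{a+b}$ satisfy $T_{a,b}^k(x)\to(0,\ldots,0)$ as $k\to\infty$. Then the series $\sum_{k\geq 0}x_a^{(k)}$ converges and $\sigma(x)=b\sum_{k\geq 0}x_a^{(k)}$.
   Context: For $n\geq 1$ let $\Lambda^n=\{x\in\mathbb{R}^n : 0\leq x_1\leq\cdots\leq x_n\}$. For integers $a,b\geq 1$ the map $T_{a,b}:\Lambda^{a+b}\to\Lambda^{a+b}$ sends $x$ to the vector obtained by arranging $x_1,\ldots,x_a,\,x_{a+1}-x_a,\ldots,x_{a+b}-x_a$ in nondecreasing order. Write $x^{(k)}=T_{a,b}^k(x)$ and $x^{(k)}_i$ for its $i$-th coordinate; $\sigma(x)=x_1+\cdots+x_{a+b}$. *)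

theory Defs
  imports Complex_Main
begin

text \<open>Vectors in R^n are represented as lists of length n; coordinate x_i (1-indexed)
is xs ! (i - 1).\<close>

definition Lambda :: "nat \<Rightarrow> real list set" where
  "Lambda n = {xs. length xs = n \<and> sorted xs \<and> (\<forall>v\<in>set xs. 0 \<le> v)}"

definition T :: "nat \<Rightarrow> nat \<Rightarrow> real list \<Rightarrow> real list" where
  "T a b xs = sort (take a xs @ map (\<lambda>v. v - xs ! (a - 1)) (take b (drop a xs)))"

definition sigma :: "real list \<Rightarrow> real" where
  "sigma xs = sum_list xs"

end

theory Submission
  imports Defs
begin

lemma sum_list_map_minus: "sum_list (map (\<lambda>v. v - c) ys) = sum_list ys - real (length ys) * c"
  by (induction ys) (auto simp: algebra_simps)

lemma sum_list_insort: "sum_list (insort_key f y l) = y + (sum_list l :: real)"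
  by (induction l) (auto simp: algebra_simps)

lemma sum_list_sort: "sum_list (sort (l::real list)) = sum_list l"
  by (induction l) (auto simp: sum_list_insort)

lemma T_props:
  assumes "length xs = a + b"
  shows "length (T a b xs) = a + b \<and> sum_list (T a b xs) = sum_list xs - real b * xs ! (a - 1)"
proof -
  have d: "take b (drop a xs) = drop a xs" using assms by simp
  have s: "sum_list (sort l) = sum_list l" for l :: "real list"
    by (rule sum_list_sort)
  have "sum_list (take a xs) + sum_list (drop a xs) = sum_list xs"
    by (metis append_take_drop_id sum_list_append)
  then show ?thesis using assms
    by (auto simp: T_def d s sum_list_map_minus algebra_simps)
qed

lemma iter_props:
  assumes "length x = a + b"
  shows "length ((T a b ^^ k) x) = a + b \<and>
    sum_list ((T a b ^^ k) x) = sum_list x - real b * (\<Sum>j<k. ((T a b ^^ j) x) ! (a - 1))"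
proof (induction k)
  case 0
  then show ?case using assms by simp
next
  case (Suc k)
  then show ?case using T_props[of "(T a b ^^ k) x" a b] by (simp add: algebra_simps)
qed

theorem lemma4p3:
  fixes a b :: nat and x :: "real list"
  assumes "a \<ge> 1" and "b \<ge> 1"
    and "x \<in> Lambda (a + b)"
    and "\<forall>i < a + b. (\<lambda>k. ((T a b ^^ k) x) ! i) \<longlonglongrightarrow> 0"
  shows "summable (\<lambda>k. ((T a b ^^ k) x) ! (a - 1))
    \<and> sigma x = real b * (\<Sum>k. ((T a b ^^ k) x) ! (a - 1))"
proof -
  define f where "f = (\<lambda>k. ((T a b ^^ k) x) ! (a - 1))"
  have len: "length x = a + b" using assms(3) by (simp add: Lambda_def)
  have S: "sum_list ((T a b ^^ k) x) = (\<Sum>i<a+b. ((T a b ^^ k) x) ! i)" for k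
    using iter_props[OF len, of k] by (simp add: sum_list_sum_nth lessThan_atLeast0)
  have "(\<lambda>k. \<Sum>i<a+b. ((T a b ^^ k) x) ! i) \<longlonglongrightarrow> (\<Sum>i<a+b. (0::real))"
    by (rule tendsto_sum) (use assms(4) in auto)
  hence L: "(\<lambda>k. sum_list ((T a b ^^ k) x)) \<longlonglongrightarrow> 0" by (simp add: S)
  have eq: "(\<Sum>j<k. f j) = (sum_list x - sum_list ((T a b ^^ k) x)) / real b" for k
    using iter_props[OF len, of k] assms(2) by (simp add: f_def field_simps)
  have "(\<lambda>k. (sum_list x - sum_list ((T a b ^^ k) x)) / real b) \<longlonglongrightarrow> (sum_list x - 0) / real b"
    by (intro tendsto_intros L) (use assms(2) in simp)
  hence "f sums (sum_list x / real b)" unfolding sums_def by (simp add: eq)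
  hence "summable f" "suminf f = sum_list x / real b" by (auto simp: sums_iff)
  thus ?thesis using assms(2) by (simp add: f_def sigma_def)
qed

end
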